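(* Let $f:\mathbb{R}^{m}\to\overline{\mathbb{R}}:=\mathbb{R}\cup\{\infty\}$ be a proper convex function that is $\mathcal{C}^{2}$-cone reducible and that is Lipschitz continuous around each point of $\operatorname{dom}f$. Let $\bar{x}\in\operatorname{dom}f$ and $\bar{u}\in\partial f(\bar{x})$. Then the subgradient mapping $\partial f$ is calm at $\bar{x}$ for $\bar{u}$.
   Context: $\partial f$ denotes the subdifferential of the convex function $f$. A closed convex set $C\subset\mathbb{R}^{m}$ is $\mathcal{C}^{2}$-cone reducible at $x\in C$ if there exist a neighborhood $U$ of $x$, a set $K\subset\mathbb{R}^{p}$ and a $\mathcal{C}^{2}$-smooth mapping $\Xi:U\to\mathbb{R}^{p}$ with surjective derivative at $x$ such that $C\cap U=\{x'\in U\mid \Xi(x')\in K\}$, $\Xi(x)=0$, and $K-\Xi(x)$ is a pointed closed convex cone. A lower semicontinuous convex function $f$ is $\mathcal{C}^{2}$-cone reducible at $x\in\operatorname{dom}f$ if its epigraph $\operatorname{epi}f=\{(x,\alpha)\mid f(x)\le\alpha\}$ is $\mathcal{C}^{2}$-cone reducible at $(x,f(x))$; $f$ is called $\mathcal{C}^{2}$-cone reducible if this holds at every point of $\operatorname{dom}f$. A set-valued mapping $S:\mathbb{R}^{n}\rightrightarrows\mathbb{R}^{m}$ is calm at $\bar z$ for $\bar w\in S(\bar z)$ if there exist $\kappa\ge0$ and $\varepsilon,\delta>0$ such that $S(z)\cap\mathbb{B}(\bar w,\delta)\subset S(\bar z)+\kappa\|z-\bar z\|\mathbb{B}_{\mathbb{R}^{m}}$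 for all $z\in\mathbb{B}(\bar z,\varepsilon)$, where $\mathbb{B}(a,r)$ is the closed ball of radius $r$ about $a$ and $\mathbb{B}_{\mathbb{R}^m}$ the closed unit ball. *)

theory Defs
  imports "HOL-Analysis.Analysis"
begin

text \<open>Extended-real-valued functions f : R^m -> R \<union> {+\<infinity>} are modelled as
  functions into ereal that never take the value -\<infinity> (part of properness).\<close>

definition dom_f :: "('a \<Rightarrow> ereal) \<Rightarrow> 'a set" where
  "dom_f f = {x. f x < \<infinity>}"

definition epi :: "('a \<Rightarrow> ereal) \<Rightarrow> ('a \<times> real) set" where
  "epi f = {(x, \<alpha>). f x \<le> ereal \<alpha>}"

definition proper_fun :: "('a \<Rightarrow> ereal) \<Rightarrow> bool" where
  "proper_fun f \<longleftrightarrow> (\<forall>x. f x \<noteq> -\<infinity>) \<and> (\<exists>x. f x < \<infinity>)"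

definition convex_fun :: "('a::real_vector \<Rightarrow> ereal) \<Rightarrow> bool" where
  "convex_fun f \<longleftrightarrow> convex (epi f)"

definition lsc_fun :: "('a::topological_space \<Rightarrow> ereal) \<Rightarrow> bool" where
  "lsc_fun f \<longleftrightarrow> closed (epi f)"

definition subdiff :: "('a::real_inner \<Rightarrow> ereal) \<Rightarrow> 'a \<Rightarrow> 'a set" where
  "subdiff f x = {v. x \<in> dom_f f \<and> (\<forall>y. f x + ereal (v \<bullet> (y - x)) \<le> f y)}"

definition C2_on :: "'a::euclidean_space set \<Rightarrow> ('a \<Rightarrow> 'b::euclidean_space) \<Rightarrow> bool" where
  "C2_on U \<Xi> \<longleftrightarrow> (\<exists>(D1 :: 'a \<Rightarrow> ('a \<Rightarrow>\<^sub>L 'b)) (D2 :: 'a \<Rightarrow> ('a \<Rightarrow>\<^sub>L ('a \<Rightarrow>\<^sub>L 'b))).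
      (\<forall>y\<in>U. (\<Xi> has_derivative blinfun_apply (D1 y)) (at y)
             \<and> (D1 has_derivative blinfun_apply (D2 y)) (at y))
      \<and> continuous_on U D2)"

text \<open>The target space R^p
  is represented as a linear subspace L of the ambient space (any p with a
  surjective derivative satisfies p \<le> dim, and R^p is isometric to such an L).\<close>
definition C2_cone_reducible_at :: "'a::euclidean_space set \<Rightarrow> 'a \<Rightarrow> bool" where
  "C2_cone_reducible_at C x \<longleftrightarrow>
     (\<exists>U L K (\<Xi> :: 'a \<Rightarrow> 'a).
        open U \<and> x \<in> U \<and> subspace L \<and> \<Xi> ` U \<subseteq> L \<and> K \<subseteq> L \<and>
        C2_on U \<Xi> \<and> range (frechet_derivative \<Xi> (at x)) = L \<and>
        C \<inter> U = {x' \<in> U. \<Xi> x' \<in> K} \<and> \<Xi> x = 0 \<and>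
        closed K \<and> convex K \<and> cone K \<and> K \<inter> uminus ` K = {0})"

definition C2_cone_reducible_fun :: "('a::euclidean_space \<Rightarrow> ereal) \<Rightarrow> bool" where
  "C2_cone_reducible_fun f \<longleftrightarrow> lsc_fun f \<and> convex_fun f \<and>
     (\<forall>x \<in> dom_f f. C2_cone_reducible_at (epi f) (x, real_of_ereal (f x)))"

definition locally_lipschitz_on_dom :: "('a::metric_space \<Rightarrow> ereal) \<Rightarrow> bool" where
  "locally_lipschitz_on_dom f \<longleftrightarrow>
     (\<forall>x \<in> dom_f f. \<exists>\<epsilon>>0. \<exists>L. ball x \<epsilon> \<subseteq> dom_f f \<and>
        L-lipschitz_on (ball x \<epsilon>) (\<lambda>y. real_of_ereal (f y)))"

definition calm_at :: "('a::metric_space \<Rightarrow> 'b::real_normed_vector set) \<Rightarrow> 'a \<Rightarrow> 'b \<Rightarrow> bool" where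
  "calm_at S z w \<longleftrightarrow> w \<in> S z \<and>
     (\<exists>\<kappa>\<ge>0. \<exists>\<epsilon>>0. \<exists>\<delta>>0. \<forall>z' \<in> cball z \<epsilon>.
        S z' \<inter> cball w \<delta> \<subseteq> {s + t | s t. s \<in> S z \<and> norm t \<le> \<kappa> * dist z' z})"

end

theory Submission
  imports Defs
begin

lemma proj_exists:
  fixes L :: "'e::euclidean_space set"
  assumes L: "subspace L"
  obtains p where "linear p" "\<And>y. p y \<in> L" "\<And>y. y \<in> L \<Longrightarrow> p y = y"
    "\<And>y l. l \<in> L \<Longrightarrow> (y - p y) \<bullet> l = 0"
proof -
  have "\<exists>a. a \<in> L \<and> (\<forall>l\<in>L. (x - a) \<bullet> l = 0)" for x
  proof -
    obtain a z where "a \<in> span L" "\<And>w. w \<in> span L \<Longrightarrow> orthogonal z w" "x = a + z"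
      using orthogonal_subspace_decomp_exists by blast
    then show ?thesis using L span_eq_iff[of L] span_base[of _ L]
      by (metis add_diff_cancel_left' orthogonal_def)
  qed
  then obtain p where p: "\<And>x. p x \<in> L" "\<And>x l. l \<in> L \<Longrightarrow> (x - p x) \<bullet> l = 0"
    by metis
  have uniq: "p x = a" if "a \<in> L" "\<And>l. l \<in> L \<Longrightarrow> (x - a) \<bullet> l = 0" for x a
  proof -
    have m: "p x - a \<in> L" using L p(1) that(1) subspace_diff by blast
    have "(p x - a) \<bullet> (p x - a) = ((x - a) - (x - p x)) \<bullet> (p x - a)"
      by (simp add: algebra_simps)
    also have "\<dots> = 0" using that(2)[OF m] p(2)[OF m] by (simp add: inner_diff_left)
    finally show ?thesis by simp
  qed
  have "linear p"
  proof (rule linearI)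
    fix x y
    show "p (x + y) = p x + p y"
    proof (rule uniq)
      show "p x + p y \<in> L" using L p(1) subspace_add by blast
      fix l assume "l \<in> L"
      then show "(x + y - (p x + p y)) \<bullet> l = 0"
        using p(2)[of l x] p(2)[of l y]
        by (simp add: algebra_simps inner_add_left inner_diff_left)
    qed
  next
    fix c x
    show "p (c *\<^sub>R x) = c *\<^sub>R p x"
    proof (rule uniq)
      show "c *\<^sub>R p x \<in> L" using L p(1) subspace_scale by blast
      fix l assume "l \<in> L"
      then show "(c *\<^sub>R x - c *\<^sub>R p x) \<bullet> l = 0"
        using p(2)[of l x]
        by (metis inner_scaleR_left mult_zero_right scaleR_right_diff_distrib)
    qed
  qed
  moreover have "p y = y" if "y \<in> L" for y
    using uniq[OF that] by simp
  ultimately show ?thesis using that p by blast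
qed

lemma dir_nonpos:
  fixes g :: "real \<Rightarrow> real"
  assumes "(g has_derivative (\<lambda>t. t * a)) (at 0)" "g 0 = 0"
    and "eventually (\<lambda>t. g t \<le> 0) (at_right 0)"
  shows "a \<le> 0"
proof -
  have "(g has_field_derivative a) (at 0 within {0<..})"
  proof -
    have e: "(\<lambda>t. t * a) = (*) a" by (auto simp: mult.commute)
    show ?thesis using has_derivative_at_withinI[OF assms(1), of "{0<..}"]
      unfolding has_field_derivative_def e .
  qed
  then have lim: "((\<lambda>y. (g y - g 0) / (y - 0)) \<longlongrightarrow> a) (at_right 0)"
    using has_field_derivative_iff by blast
  have "eventually (\<lambda>y. (g y - g 0) / (y - 0) \<le> 0) (at_right 0)"
    using assms(3) eventually_at_right_less[of 0]
  proof eventually_elim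
    case (elim t) then show ?case using assms(2) by (simp add: divide_nonpos_pos)
  qed
  then show ?thesis using tendsto_upperbound[OF lim] by simp
qed

lemma cone_add:
  assumes "convex K" "cone K" "a \<in> K" "b \<in> K"
  shows "a + b \<in> K"
proof -
  have "(1/2) *\<^sub>R a + (1/2) *\<^sub>R b \<in> K" using assms convexD[of K a b "1/2" "1/2"] by simp
  then have "2 *\<^sub>R ((1/2) *\<^sub>R a + (1/2) *\<^sub>R b) \<in> K" using assms(2) cone_def by (metis zero_le_numeral)
  then show ?thesis by (simp add: scaleR_add_right)
qed

lemma line_eventually:
  fixes k v :: "'e::real_normed_vector"
  assumes "open V" "k \<in> V"
  shows "eventually (\<lambda>t. k + t *\<^sub>R v \<in> V \<and> 0 < t \<and> t < 1) (at_right (0::real))"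
proof -
  have "((\<lambda>t. k + t *\<^sub>R v) \<longlongrightarrow> k + 0 *\<^sub>R v) (at_right (0::real))"
    by (intro tendsto_intros)
  then have "eventually (\<lambda>t. k + t *\<^sub>R v \<in> V) (at_right (0::real))"
    using assms topological_tendstoD by fastforce
  moreover have "eventually (\<lambda>t. 0 < t \<and> t < 1) (at_right (0::real))"
    by (rule eventually_at_rightI[of 0 1]) auto
  ultimately show ?thesis by eventually_elim auto
qed

lemma line_deriv:
  fixes k v :: "'e::real_normed_vector"
  assumes "(F has_derivative F') (at k)"
  shows "((\<lambda>t. F (k + t *\<^sub>R v)) has_derivative (\<lambda>t. F' (t *\<^sub>R v))) (at (0::real))"
proof -
  have l: "((\<lambda>t. k + t *\<^sub>R v) has_derivative (\<lambda>t. t *\<^sub>R v)) (at (0::real))"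
    by (auto intro!: derivative_eq_intros)
  have "(F has_derivative F') (at (k + 0 *\<^sub>R v))" using assms by simp
  from has_derivative_compose[OF l this] show ?thesis .
qed

lemma core:
  fixes Xi :: "'e::euclidean_space \<Rightarrow> 'e" and D1 :: "'e \<Rightarrow> ('e \<Rightarrow>\<^sub>L 'e)"
  assumes U: "open U" "cb \<in> U" and C: "convex C" "cb \<in> C"
    and der: "\<And>y. y \<in> U \<Longrightarrow> (Xi has_derivative blinfun_apply (D1 y)) (at y)"
    and contD: "continuous_on U D1"
    and r0: "r0 > 0" "M \<ge> 0"
    and lipD: "\<And>y. y \<in> ball cb r0 \<Longrightarrow> norm (D1 y - D1 cb) \<le> M * norm (y - cb)"
    and L: "subspace L" "Xi ` U \<subseteq> L" "K \<subseteq> L" "range (blinfun_apply (D1 cb)) = L"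
    and CU: "C \<inter> U = {y\<in>U. Xi y \<in> K}" and X0: "Xi cb = 0" and K: "convex K" "cone K"
  shows "\<exists>\<rho>>0. \<exists>\<kappa>\<ge>0. \<forall>c\<in>C \<inter> ball cb \<rho>. \<forall>n. (\<forall>c'\<in>C. n \<bullet> (c' - c) \<le> 0) \<longrightarrow>
          (\<exists>w. (\<forall>c'\<in>C. w \<bullet> (c' - cb) \<le> 0) \<and> norm (w - n) \<le> \<kappa> * norm n * norm (c - cb))"
proof -
  obtain p where p: "linear p" "\<And>y. p y \<in> L" "\<And>y. y \<in> L \<Longrightarrow> p y = y"
    "\<And>y l. l \<in> L \<Longrightarrow> (y - p y) \<bullet> l = 0"
    using proj_exists[OF L(1)] by blast
  define p2 where "p2 y = y - p y" for y
  have lp2: "linear p2" unfolding p2_def by (intro linear_compose_sub linear_ident p(1))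
  have pp2: "p (p2 z) = 0" for z
    using p(1,2,3) by (simp add: p2_def linear_diff)
  define A where "A = blinfun_apply (D1 cb)"
  have lA: "linear A" unfolding A_def by (simp add: blinfun.bounded_linear_right bounded_linear.linear)
  define AT where "AT = adjoint A"
  have lAT: "linear AT" unfolding AT_def by (simp add: adjoint_linear lA)
  have ATw: "d \<bullet> AT w = A d \<bullet> w" for d w unfolding AT_def by (simp add: adjoint_works lA)
  define Gf where "Gf = (\<lambda>q::'e\<times>'e. (Xi (fst q) + p2 (snd q), fst q - cb + AT (snd q)))"
  define Tf where "Tf X = (\<lambda>q::'e\<times>'e. (blinfun_apply X (fst q) + p2 (snd q), fst q + AT (snd q)))"
    for X :: "'e \<Rightarrow>\<^sub>L 'e"
  have linT: "linear (Tf X)" for X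
    by (rule linearI) (simp_all add: Tf_def blinfun.add_right blinfun.scaleR_right
        linear_add[OF lp2] linear_add[OF lAT] linear_scale[OF lp2] linear_scale[OF lAT] scaleR_add_right)
  have BT: "blinfun_apply (Blinfun (Tf X)) = Tf X" for X
    using linT[of X] linear_conv_bounded_linear bounded_linear_Blinfun_apply by metis
  have Bg: "blinfun_apply (Blinfun g) = g" if "linear g" for g :: "'e \<times> 'e \<Rightarrow> 'e \<times> 'e"
    using that linear_conv_bounded_linear bounded_linear_Blinfun_apply by metis
  define DG where "DG q = Blinfun (Tf (D1 (fst q)))" for q :: "'e \<times> 'e"
  have DG_apply: "blinfun_apply (DG q) = Tf (D1 (fst q))" for q
    unfolding DG_def by (rule BT)
  have derG: "(Gf has_derivative blinfun_apply (DG q)) (at q)" if "q \<in> U \<times> UNIV" for q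
  proof -
    have d1: "((\<lambda>q. Xi (fst q)) has_derivative (\<lambda>h. blinfun_apply (D1 (fst q)) (fst h))) (at q)"
      using that by (auto intro!: has_derivative_compose[OF has_derivative_fst[OF has_derivative_ident]] der)
    have d2: "((\<lambda>q. p2 (snd q)) has_derivative (\<lambda>h. p2 (snd h))) (at q)"
      using lp2 by (auto intro!: bounded_linear.has_derivative[of p2] has_derivative_snd has_derivative_ident
          simp: linear_conv_bounded_linear)
    have d3: "((\<lambda>q. AT (snd q)) has_derivative (\<lambda>h. AT (snd h))) (at q)"
      using lAT by (auto intro!: bounded_linear.has_derivative[of AT] has_derivative_snd has_derivative_ident
          simp: linear_conv_bounded_linear)
    have "(Gf has_derivative (\<lambda>h. (blinfun_apply (D1 (fst q)) (fst h) + p2 (snd h), fst h - 0 + AT (snd h)))) (at q)"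
      unfolding Gf_def
      by (intro has_derivative_Pair has_derivative_add d1 d2 d3 has_derivative_diff
          has_derivative_fst[OF has_derivative_ident] has_derivative_const)
    then show ?thesis by (simp add: DG_apply Tf_def)
  qed
  have Tdiff: "norm (Blinfun (Tf X) - Blinfun (Tf Y)) \<le> norm (X - Y)" for X Y
  proof (rule norm_blinfun_bound)
    fix q :: "'e \<times> 'e"
    have "blinfun_apply (Blinfun (Tf X) - Blinfun (Tf Y)) q = (blinfun_apply (X - Y) (fst q), 0)"
      by (simp only: blinfun.diff_left BT) (simp add: Tf_def)
    also have "norm \<dots> \<le> norm (X - Y) * norm q"
    proof -
      have "norm (blinfun_apply (X - Y) (fst q), 0::'e) = norm (blinfun_apply (X - Y) (fst q))"
        by (simp add: norm_Pair)
      also have "\<dots> \<le> norm (X - Y) * norm (fst q)" by (rule norm_blinfun)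
      also have "\<dots> \<le> norm (X - Y) * norm q" by (intro mult_left_mono norm_fst_le[of "fst q" "snd q", simplified]) simp
      finally show ?thesis .
    qed
    finally show "norm (blinfun_apply (Blinfun (Tf X) - Blinfun (Tf Y)) q) \<le> norm (X - Y) * norm q" .
  qed simp
  have contDG: "continuous_on (U \<times> UNIV) DG"
    unfolding continuous_on_iff
  proof (intro ballI allI impI)
    fix q :: "'e \<times> 'e" and e :: real assume q: "q \<in> U \<times> UNIV" and e: "0 < e"
    have "continuous_on (U \<times> (UNIV::'e set)) (\<lambda>q. D1 (fst q))"
      by (intro continuous_on_compose2[OF contD] continuous_intros) auto
    then obtain d where "d > 0" "\<And>q'. q' \<in> U \<times> UNIV \<Longrightarrow> dist q' q < d \<Longrightarrow> dist (D1 (fst q')) (D1 (fst q)) < e"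
      using q e unfolding continuous_on_iff by metis
    moreover have "dist (DG q') (DG q) \<le> dist (D1 (fst q')) (D1 (fst q))" for q'
      unfolding DG_def dist_norm by (rule Tdiff)
    ultimately show "\<exists>d>0. \<forall>q'\<in>U \<times> UNIV. dist q' q < d \<longrightarrow> dist (DG q') (DG q) < e"
      by (meson order_le_less_trans)
  qed
  have injT: "inj (Tf (D1 cb))"
  proof (rule linear_injective_0[THEN iffD2, OF linT], intro allI impI)
    fix q :: "'e \<times> 'e" assume "Tf (D1 cb) q = 0"
    then have e1: "A (fst q) + p2 (snd q) = 0" and e2: "fst q + AT (snd q) = 0"
      by (simp_all add: Tf_def A_def prod_eq_iff)
    have AL: "A d \<in> L" for d using L(4) A_def by blast
    have "p (A (fst q) + p2 (snd q)) = p (A (fst q)) + p (p2 (snd q))" by (rule linear_add[OF p(1)])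
    also have "\<dots> = A (fst q)" by (simp add: p(3)[OF AL] pp2)
    finally have a0: "A (fst q) = 0" using e1 linear_0[OF p(1)] by simp
    then have "p2 (snd q) = 0" using e1 by simp
    then have wL: "snd q \<in> L" using p(2)[of "snd q"] by (simp add: p2_def)
    have "A (fst q) + A (AT (snd q)) = A (fst q + AT (snd q))" by (rule linear_add[OF lA, symmetric])
    also have "\<dots> = 0" using e2 linear_0[OF lA] by simp
    finally have "A (fst q) + A (AT (snd q)) = 0" .
    then have "A (AT (snd q)) = 0" using a0 by simp
    then have "AT (snd q) \<bullet> AT (snd q) = 0" using ATw[of "AT (snd q)" "snd q"] by simp
    then have at0: "AT (snd q) = 0" by simp
    then have "fst q = 0" using e2 by simp
    have "snd q \<in> range A" using wL L(4) unfolding A_def by simp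
    then obtain d where "A d = snd q" by (metis rangeE)
    then have "snd q \<bullet> snd q = 0" using ATw[of d "snd q"] at0 by simp
    then have "snd q = 0" by simp
    with \<open>fst q = 0\<close> show "q = 0" by (simp add: prod_eq_iff)
  qed
  obtain g where lg: "linear g" and gT: "g \<circ> Tf (D1 cb) = id"
    using linear_injective_left_inverse[OF linT injT] by blast
  obtain m where m: "m > 0" "\<And>q. m * norm q \<le> norm (Tf (D1 cb) q)"
    using linear_inj_bounded_below_pos[OF linT injT] by blast
  have invf: "Blinfun g o\<^sub>L DG (cb, 0) = id_blinfun"
    by (rule blinfun_eqI) (use gT in \<open>simp add: Bg[OF lg] DG_apply pointfree_idE\<close>)
  obtain U' V H H' where IFT: "open U'" "U' \<subseteq> U \<times> UNIV" "(cb, 0) \<in> U'" "open V" "Gf (cb, 0) \<in> V"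
    "homeomorphism U' V Gf H"
    "\<And>y. y \<in> V \<Longrightarrow> (H has_derivative (H' y)) (at y)"
    "\<And>y. y \<in> V \<Longrightarrow> H' y = inv (blinfun_apply (DG (H y)))"
    "\<And>y. y \<in> V \<Longrightarrow> bij (blinfun_apply (DG (H y)))"
  proof -
    have oUU: "open (U \<times> (UNIV::'e set))" by (simp add: open_Times U(1))
    have x0: "(cb, 0::'e) \<in> U \<times> UNIV" using U(2) by simp
    show ?thesis by (rule inverse_function_theorem[OF oUU derG contDG x0 invf], assumption, rule that, assumption+)
  qed
  have hom: "\<And>x. x \<in> U' \<Longrightarrow> H (Gf x) = x" "Gf ` U' = V" "\<And>y. y \<in> V \<Longrightarrow> Gf (H y) = y"
    "H ` V = U'"
    using IFT(6) unfolding homeomorphism_def by auto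
  obtain e1 where e1: "e1 > 0" "ball (cb, 0) e1 \<subseteq> U'" using IFT(1,3) openE by blast
  obtain e2 where e2: "e2 > 0" "ball cb e2 \<subseteq> U" using U openE by blast
  define \<rho> where "\<rho> = min (min r0 e1) (min e2 (m / (2 * (M + 1))))"
  have \<rho>: "\<rho> > 0" using r0 e1 e2 m by (simp add: \<rho>_def)
  define K' where "K' = p -` K"
  have cK': "convex K'" unfolding K'_def by (rule convex_linear_vimage[OF p(1) K(1)])
  have LK': "y \<in> K'" if "y \<in> K" for y using that L(3) p(3) by (auto simp: K'_def)
  have Uin: "Xi y \<in> K" if "y \<in> C" "y \<in> U" for y using CU that by blast
  have inC: "y \<in> C" if "y \<in> U" "Xi y \<in> K" for y using CU that by blast
  have XiL: "Xi y \<in> L" if "y \<in> U" for y using L(2) that by blast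
  have p20: "p2 0 = 0" by (simp add: linear_0[OF lp2])
  have AT0: "AT 0 = 0" by (simp add: linear_0[OF lAT])
  have \<kappa>0: "0 \<le> 2 * M / m" using r0 m by simp
  have main: "\<exists>w. (\<forall>c'\<in>C. w \<bullet> (c' - cb) \<le> 0) \<and> norm (w - n) \<le> 2 * M / m * norm n * norm (c - cb)"
    if c: "c \<in> C \<inter> ball cb \<rho>" and nrm: "\<forall>c'\<in>C. n \<bullet> (c' - c) \<le> 0" for c n
  proof -
    have dc: "norm (c - cb) < \<rho>" using c by (simp add: dist_norm norm_minus_commute)
    have cU: "c \<in> U" using c e2 \<rho>_def by (auto simp: dist_commute)
    have cr0: "c \<in> ball cb r0" using c \<rho>_def by auto
    have cU': "(c, 0) \<in> U'"
    proof -
      have "dist (cb, 0) (c, (0::'e)) = dist cb c" by (simp add: dist_Pair_Pair)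
      then show ?thesis using c e1 \<rho>_def by (auto simp: dist_commute)
    qed
    define k where "k = Gf (c, 0)"
    have kV: "k \<in> V" using hom(2) cU' k_def by blast
    have Hk: "H k = (c, 0)" using hom(1) cU' k_def by blast
    have k_eq: "k = (Xi c, c - cb)" by (simp add: k_def Gf_def p20 AT0)
    have XcK: "Xi c \<in> K" using Uin c cU by blast
    define Tc where "Tc = blinfun_apply (DG (c, 0))"
    have Tc_eq: "Tc = Tf (D1 c)" by (simp add: Tc_def DG_apply)
    have bijT: "bij Tc" using IFT(9)[OF kV] Hk Tc_def by simp
    define S where "S = H' k"
    have S_eq: "S = inv Tc" using IFT(8)[OF kV] Hk Tc_def S_def by simp
    have derH: "(H has_derivative S) (at k)" using IFT(7)[OF kV] S_def by simp
    have lS: "linear S" using derH has_derivative_linear by blast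
    have TS: "Tc (S q) = q" for q using bijT S_eq by (simp add: bij_is_surj surj_f_inv_f)
    have ST: "S (Tc q) = q" for q using bijT S_eq by (simp add: bij_is_inj inv_f_f)
    have nD: "norm (D1 c - D1 cb) \<le> m / 2"
    proof -
      have "norm (D1 c - D1 cb) \<le> M * norm (c - cb)" using lipD cr0 .
      also have "\<dots> \<le> M * (m / (2 * (M + 1)))"
        using dc \<rho>_def r0 by (intro mult_left_mono) auto
      also have "\<dots> \<le> m / 2" using r0 m by (simp add: field_simps)
      finally show ?thesis .
    qed
    have Tlow: "m / 2 * norm q \<le> norm (Tc q)" for q
    proof -
      have "Tc q = Tf (D1 cb) q + (blinfun_apply (D1 c - D1 cb) (fst q), 0)"
        by (simp add: Tc_eq Tf_def blinfun.diff_left)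
      moreover have "norm (blinfun_apply (D1 c - D1 cb) (fst q), 0::'e) \<le> m / 2 * norm q"
      proof -
        have "norm (blinfun_apply (D1 c - D1 cb) (fst q), 0::'e) = norm (blinfun_apply (D1 c - D1 cb) (fst q))"
          by (simp add: norm_Pair)
        also have "\<dots> \<le> norm (D1 c - D1 cb) * norm (fst q)" by (rule norm_blinfun)
        also have "\<dots> \<le> m / 2 * norm q"
          using nD norm_fst_le[of "fst q" "snd q"] m(1) by (intro mult_mono) auto
        finally show ?thesis .
      qed
      moreover have "norm (Tf (D1 cb) q) - norm (blinfun_apply (D1 c - D1 cb) (fst q), 0::'e)
          \<le> norm (Tf (D1 cb) q + (blinfun_apply (D1 c - D1 cb) (fst q), 0))"
        by (rule norm_diff_ineq)
      ultimately show ?thesis using m(2)[of q] by simp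
    qed
    have Sb: "norm (S q) \<le> 2 / m * norm q" for q
      using Tlow[of "S q"] TS[of q] m by (simp add: field_simps)
    define \<phi> where "\<phi> q = n \<bullet> fst (S q)" for q
    have l\<phi>: "linear \<phi>"
      by (rule linearI) (simp_all add: \<phi>_def linear_add[OF lS] linear_scale[OF lS] inner_add_right)
    define \<phi>1 where "\<phi>1 y = \<phi> (y, 0)" for y
    have l\<phi>1: "linear \<phi>1"
    proof (rule linearI)
      fix x y show "\<phi>1 (x + y) = \<phi>1 x + \<phi>1 y"
        using linear_add[OF l\<phi>, of "(x, 0)" "(y, 0)"] by (simp add: \<phi>1_def)
    next
      fix r x
      have "\<phi>1 (r *\<^sub>R x) = \<phi> (r *\<^sub>R (x, 0))" by (simp add: \<phi>1_def)
      also have "\<dots> = r *\<^sub>R \<phi>1 x" unfolding \<phi>1_def by (rule linear_scale[OF l\<phi>])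
      finally show "\<phi>1 (r *\<^sub>R x) = r *\<^sub>R \<phi>1 x" .
    qed
    have key: "\<phi> (q - k) \<le> 0" if q: "fst q \<in> K'" for q
    proof (rule dir_nonpos)
      let ?g = "\<lambda>t. n \<bullet> (fst (H (k + t *\<^sub>R (q - k))) - c)"
      have "(?g has_derivative (\<lambda>t. n \<bullet> (fst (S (t *\<^sub>R (q - k))) - 0))) (at 0)"
        by (intro has_derivative_inner_right has_derivative_diff has_derivative_const
            has_derivative_fst line_deriv derH)
      moreover have "(\<lambda>t. n \<bullet> (fst (S (t *\<^sub>R (q - k))) - 0)) = (\<lambda>t. t * \<phi> (q - k))"
        by (auto simp: \<phi>_def linear_scale[OF lS])
      ultimately show "(?g has_derivative (\<lambda>t. t * \<phi> (q - k))) (at 0)" by simp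
      show "?g 0 = 0" using Hk by simp
      show "eventually (\<lambda>t. ?g t \<le> 0) (at_right 0)"
        using line_eventually[OF IFT(4) kV, of "q - k"]
      proof eventually_elim
        case (elim t)
        let ?y = "k + t *\<^sub>R (q - k)"
        have fy: "fst ?y = (1 - t) *\<^sub>R fst k + t *\<^sub>R fst q" by (simp add: algebra_simps)
        have fk: "fst k \<in> K'" using k_eq XcK LK' by simp
        have "fst ?y \<in> K'" using fy convexD[OF cK' fk q, of "1 - t" t] elim by simp
        moreover have HU: "H ?y \<in> U \<times> UNIV" using hom(4) elim IFT(2) by blast
        moreover have "Gf (H ?y) = ?y" using hom(3) elim by blast
        ultimately have "Xi (fst (H ?y)) + p2 (snd (H ?y)) \<in> K'" unfolding Gf_def by (metis fst_conv)
        then have "p (Xi (fst (H ?y))) + p (p2 (snd (H ?y))) \<in> K" by (simp add: K'_def linear_add[OF p(1)])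
        then have "Xi (fst (H ?y)) \<in> K" using HU XiL p(3) pp2 by (simp add: mem_Times_iff)
        then have "fst (H ?y) \<in> C" using inC HU by (simp add: mem_Times_iff)
        then show ?case using nrm by blast
      qed
    qed
    have phi0: "\<phi> (0, e) = 0" for e
    proof -
      have "\<phi> ((k + (0, e)) - k) \<le> 0" using key[of "k + (0, e)"] k_eq XcK LK' by simp
      moreover have "\<phi> ((k + (0, -e)) - k) \<le> 0" using key[of "k + (0, -e)"] k_eq XcK LK' by simp
      moreover have "\<phi> (0, -e) = - \<phi> (0, e)" using linear_neg[OF l\<phi>, of "(0, e)"] by simp
      ultimately show ?thesis by simp
    qed
    have phi1: "\<phi>1 y \<le> 0" if "y \<in> K'" for y
    proof -
      have "p (Xi c + y) = Xi c + p y" using p(3)[OF XiL[OF cU]] linear_add[OF p(1)] by simp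
      also have "\<dots> \<in> K" using cone_add[OF K XcK] that K'_def by simp
      finally have "fst (k + (y, 0)) \<in> K'" using k_eq K'_def by simp
      from key[OF this] show ?thesis by (simp add: \<phi>1_def)
    qed
    have ndec: "n \<bullet> d = \<phi>1 (blinfun_apply (D1 c) d)" for d
    proof -
      have "Tc (d, 0) = (blinfun_apply (D1 c) d, 0) + (0, d)"
        by (simp add: Tc_eq Tf_def p20 AT0)
      then have "n \<bullet> d = \<phi> ((blinfun_apply (D1 c) d, 0) + (0, d))"
        using ST[of "(d, 0)"] by (simp add: \<phi>_def)
      also have "\<dots> = \<phi> (blinfun_apply (D1 c) d, 0) + \<phi> (0, d)" by (rule linear_add[OF l\<phi>])
      also have "\<dots> = \<phi>1 (blinfun_apply (D1 c) d)"
        by (simp add: phi0 \<phi>1_def)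
      finally show ?thesis .
    qed
    define \<psi> where "\<psi> d = \<phi>1 (A d)" for d
    have l\<psi>: "linear \<psi>" unfolding \<psi>_def using linear_compose[OF lA l\<phi>1] by (simp add: o_def)
    define w where "w = adjoint \<psi> 1"
    have wd: "d \<bullet> w = \<phi>1 (A d)" for d
      using adjoint_works[OF l\<psi>, of d 1] by (simp add: w_def \<psi>_def)
    have \<phi>1b: "\<bar>\<phi>1 y\<bar> \<le> norm n * (2 / m) * norm y" for y
    proof -
      have "\<bar>\<phi>1 y\<bar> \<le> norm n * norm (fst (S (y, 0)))"
        unfolding \<phi>1_def \<phi>_def by (rule Cauchy_Schwarz_ineq2)
      also have "\<dots> \<le> norm n * norm (S (y, 0))"
        by (intro mult_left_mono) (simp_all add: norm_fst_le[of "fst (S (y, 0))" "snd (S (y, 0))", simplified])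
      also have "\<dots> \<le> norm n * (2 / m * norm (y, 0::'e))"
        by (intro mult_left_mono Sb) simp
      finally show ?thesis by (simp add: norm_Pair)
    qed
    show ?thesis
    proof (intro exI[of _ w] conjI ballI)
      fix c' assume c': "c' \<in> C"
      have "\<phi>1 (A (c' - cb)) \<le> 0"
      proof (rule dir_nonpos)
        let ?g = "\<lambda>t. \<phi>1 (Xi (cb + t *\<^sub>R (c' - cb)))"
        have "(?g has_derivative (\<lambda>t. \<phi>1 (A (t *\<^sub>R (c' - cb))))) (at 0)"
          using l\<phi>1 unfolding linear_conv_bounded_linear
          by (intro bounded_linear.has_derivative[of \<phi>1] line_deriv) (auto simp: A_def der U)
        moreover have "(\<lambda>t. \<phi>1 (A (t *\<^sub>R (c' - cb)))) = (\<lambda>t. t * \<phi>1 (A (c' - cb)))"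
          by (auto simp: linear_scale[OF lA] linear_scale[OF l\<phi>1])
        ultimately show "(?g has_derivative (\<lambda>t. t * \<phi>1 (A (c' - cb)))) (at 0)" by simp
        show "?g 0 = 0" using X0 linear_0[OF l\<phi>1] by simp
        show "eventually (\<lambda>t. ?g t \<le> 0) (at_right 0)"
          using line_eventually[OF U, of "c' - cb"]
        proof eventually_elim
          case (elim t)
          have "cb + t *\<^sub>R (c' - cb) = (1 - t) *\<^sub>R cb + t *\<^sub>R c'" by (simp add: algebra_simps)
          then have "cb + t *\<^sub>R (c' - cb) \<in> C" using convexD[OF C(1) C(2) c', of "1 - t" t] elim by simp
          then have "Xi (cb + t *\<^sub>R (c' - cb)) \<in> K'" using Uin elim LK' by blast
          then show ?case using phi1 by blast
        qed
      qed
      then show "w \<bullet> (c' - cb) \<le> 0" using wd[of "c' - cb"] by (simp add: inner_commute)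
    next
      let ?d = "w - n"
      have "?d \<bullet> ?d = ?d \<bullet> w - ?d \<bullet> n" by (simp add: inner_diff_right)
      also have "\<dots> = \<phi>1 (A ?d) - \<phi>1 (blinfun_apply (D1 c) ?d)"
        using wd[of ?d] ndec[of ?d] by (simp add: inner_commute)
      also have "\<dots> = \<phi>1 (blinfun_apply (D1 cb - D1 c) ?d)"
        by (simp add: A_def blinfun.diff_left linear_diff[OF l\<phi>1])
      also have "\<dots> \<le> norm n * (2 / m) * norm (blinfun_apply (D1 cb - D1 c) ?d)"
        using \<phi>1b by (meson abs_le_D1)
      also have "\<dots> \<le> norm n * (2 / m) * (M * norm (c - cb) * norm ?d)"
      proof (intro mult_left_mono)
        have "norm (blinfun_apply (D1 cb - D1 c) ?d) \<le> norm (D1 cb - D1 c) * norm ?d" by (rule norm_blinfun)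
        also have "\<dots> \<le> M * norm (c - cb) * norm ?d"
          using lipD[OF cr0] by (intro mult_right_mono) (simp_all add: norm_minus_commute)
        finally show "norm (blinfun_apply (D1 cb - D1 c) ?d) \<le> M * norm (c - cb) * norm ?d" .
      qed (use m in simp_all)
      finally have "norm ?d * norm ?d \<le> (2 * M / m * norm n * norm (c - cb)) * norm ?d"
        by (simp add: power2_norm_eq_inner[symmetric] power2_eq_square mult_ac)
      moreover have "0 \<le> 2 * M / m * norm n * norm (c - cb)" using \<kappa>0 by (intro mult_nonneg_nonneg) auto
      ultimately show "norm ?d \<le> 2 * M / m * norm n * norm (c - cb)"
        by (metis mult_right_le_imp_le norm_ge_zero order_le_less)
    qed
  qed
  show ?thesis using main \<rho> \<kappa>0 by blast
qed

theorem proposition2p4: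
  fixes f :: "'a::euclidean_space \<Rightarrow> ereal" and xbar ubar :: 'a
  assumes "proper_fun f" and "convex_fun f"
    and "C2_cone_reducible_fun f"
    and "locally_lipschitz_on_dom f"
    and "xbar \<in> dom_f f" and "ubar \<in> subdiff f xbar"
  shows "calm_at (subdiff f) xbar ubar"
proof -
  have fin: "f x = ereal (real_of_ereal (f x))" if "x \<in> dom_f f" for x
  proof -
    have "f x \<noteq> -\<infinity>" "f x < \<infinity>" using that assms(1) unfolding dom_f_def proper_fun_def by auto
    then show ?thesis by (cases "f x") auto
  qed
  define rb where "rb = real_of_ereal (f xbar)"
  define cb where "cb = (xbar, rb)"
  have "C2_cone_reducible_at (epi f) cb"
    using assms(3,5) unfolding C2_cone_reducible_fun_def cb_def rb_def by blast
  then obtain U L K and Xi :: "'a \<times> real \<Rightarrow> 'a \<times> real" where red: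
    "open U" "cb \<in> U" "subspace L" "Xi ` U \<subseteq> L" "K \<subseteq> L"
    "C2_on U Xi" "range (frechet_derivative Xi (at cb)) = L"
    "epi f \<inter> U = {x' \<in> U. Xi x' \<in> K}" "Xi cb = 0"
    "closed K" "convex K" "cone K"
    unfolding C2_cone_reducible_at_def by blast
  then obtain D1 :: "'a \<times> real \<Rightarrow> ('a \<times> real) \<Rightarrow>\<^sub>L ('a \<times> real)"
    and D2 :: "'a \<times> real \<Rightarrow> ('a \<times> real) \<Rightarrow>\<^sub>L (('a \<times> real) \<Rightarrow>\<^sub>L ('a \<times> real))" where
    D: "\<And>y. y \<in> U \<Longrightarrow> (Xi has_derivative blinfun_apply (D1 y)) (at y)"
       "\<And>y. y \<in> U \<Longrightarrow> (D1 has_derivative blinfun_apply (D2 y)) (at y)"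
       "continuous_on U D2"
    unfolding C2_on_def by blast
  have contD: "continuous_on U D1"
    using D(2) red(1) by (meson continuous_on_eq_continuous_at has_derivative_continuous)
  have rng: "range (blinfun_apply (D1 cb)) = L"
    using red(7) frechet_derivative_at[OF D(1)[OF red(2)]] by simp
  obtain r1 where r1: "r1 > 0" "ball cb r1 \<subseteq> U" "\<And>y. y \<in> ball cb r1 \<Longrightarrow> dist (D2 y) (D2 cb) < 1"
  proof -
    have "continuous (at cb) D2" using D(3) red(1,2) continuous_on_eq_continuous_at by blast
    then obtain d1 where "d1 > 0" "\<And>y. dist y cb < d1 \<Longrightarrow> dist (D2 y) (D2 cb) < 1"
      unfolding continuous_at_eps_delta by (meson zero_less_one)
    moreover obtain d2 where "d2 > 0" "ball cb d2 \<subseteq> U" using red(1,2) openE by blast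
    ultimately show ?thesis
      by (intro that[of "min d1 d2"]) (auto simp: dist_commute)
  qed
  define B where "B = norm (D2 cb) + 1"
  have B0: "B \<ge> 0" by (simp add: B_def)
  have lipD: "norm (D1 y - D1 cb) \<le> B * norm (y - cb)" if y: "y \<in> ball cb r1" for y
  proof (rule differentiable_bound[of "ball cb r1" D1 "\<lambda>y. blinfun_apply (D2 y)"])
    show "convex (ball cb r1)" by simp
    show "(D1 has_derivative blinfun_apply (D2 x)) (at x within ball cb r1)" if "x \<in> ball cb r1" for x
    proof -
      have "x \<in> U" using r1(2) that by blast
      from has_derivative_at_withinI[OF D(2)[OF this]] show ?thesis .
    qed
    show "onorm (blinfun_apply (D2 x)) \<le> B" if "x \<in> ball cb r1" for x
    proof -
      have "norm (D2 x) \<le> norm (D2 cb) + dist (D2 x) (D2 cb)"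
        by (metis dist_norm norm_triangle_sub)
      then show ?thesis using r1(3)[OF that] by (simp add: B_def norm_blinfun.rep_eq[symmetric])
    qed
    show "y \<in> ball cb r1" by fact
    show "cb \<in> ball cb r1" using r1 by simp
  qed
  have cvx: "convex (epi f)" using assms(2) convex_fun_def by blast
  have cbE: "cb \<in> epi f" using fin[OF assms(5)] by (simp add: epi_def cb_def rb_def)
  obtain \<rho> \<kappa> where \<rho>: "\<rho> > 0" "\<kappa> \<ge> 0" and
    core: "\<And>c n. c \<in> epi f \<inter> ball cb \<rho> \<Longrightarrow> (\<forall>c'\<in>epi f. n \<bullet> (c' - c) \<le> 0) \<Longrightarrow>
          (\<exists>w. (\<forall>c'\<in>epi f. w \<bullet> (c' - cb) \<le> 0) \<and> norm (w - n) \<le> \<kappa> * norm n * norm (c - cb))"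
    using core[OF red(1,2) cvx cbE D(1) contD r1(1) B0 lipD red(3,4,5) rng red(8,9,11,12)] by blast
  obtain \<epsilon>0 Lf where lf: "\<epsilon>0 > 0" "ball xbar \<epsilon>0 \<subseteq> dom_f f"
    "Lf-lipschitz_on (ball xbar \<epsilon>0) (\<lambda>y. real_of_ereal (f y))"
    using assms(4,5) unfolding locally_lipschitz_on_dom_def by blast
  have Lf0: "Lf \<ge> 0" using lf(3) lipschitz_on_nonneg by blast
  define N0 where "N0 = norm ubar + 2"
  define \<kappa>1 where "\<kappa>1 = \<kappa> * N0 * (1 + Lf)"
  have \<kappa>10: "\<kappa>1 \<ge> 0" using \<rho> Lf0 by (simp add: \<kappa>1_def N0_def)
  define \<epsilon> where "\<epsilon> = min (\<epsilon>0 / 2) (min (\<rho> / (2 * (1 + Lf))) (1 / (2 * (\<kappa>1 + 1))))"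
  have "0 < \<rho> / (2 * (1 + Lf))" using \<rho> Lf0 by (intro divide_pos_pos) auto
  moreover have "0 < 1 / (2 * (\<kappa>1 + 1))" using \<kappa>10 by (intro divide_pos_pos) auto
  ultimately have \<epsilon>0: "\<epsilon> > 0" using lf(1) by (simp add: \<epsilon>_def)
  define \<kappa>f where "\<kappa>f = (2 * N0 + 1) * \<kappa>1"
  have \<kappa>f0: "\<kappa>f \<ge> 0" using \<kappa>10 by (simp add: \<kappa>f_def N0_def)
  have incl: "subdiff f x \<inter> cball ubar 1 \<subseteq> {s + t |s t. s \<in> subdiff f xbar \<and> norm t \<le> \<kappa>f * dist x xbar}"
    if x: "x \<in> cball xbar \<epsilon>" for x
  proof
    fix u assume u: "u \<in> subdiff f x \<inter> cball ubar 1"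
    have xd: "dist x xbar \<le> \<epsilon>" using x by (simp add: dist_commute)
    have xb: "x \<in> ball xbar \<epsilon>0" using xd lf(1) by (simp add: \<epsilon>_def dist_commute)
    have xbb: "xbar \<in> ball xbar \<epsilon>0" using lf(1) by simp
    have xdom: "x \<in> dom_f f" using xb lf(2) by blast
    define r where "r = real_of_ereal (f x)"
    have fx: "f x = ereal r" using fin[OF xdom] r_def by simp
    have fxb: "f xbar = ereal rb" using fin[OF assms(5)] rb_def by simp
    have fr: "\<bar>r - rb\<bar> \<le> Lf * dist x xbar"
      using lipschitz_onD[OF lf(3) xb xbb] by (simp add: r_def rb_def dist_real_def)
    define c where "c = (x, r)"
    have cE: "c \<in> epi f" by (simp add: c_def epi_def fx)
    have ncb: "norm (c - cb) \<le> (1 + Lf) * dist x xbar"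
    proof -
      have "norm (c - cb) = norm (x - xbar, r - rb)" by (simp add: c_def cb_def)
      also have "\<dots> \<le> norm (x - xbar) + norm (r - rb)" by (rule norm_Pair_le)
      also have "\<dots> \<le> (1 + Lf) * dist x xbar" using fr by (simp add: dist_norm algebra_simps)
      finally show ?thesis .
    qed
    have "(1 + Lf) * dist x xbar \<le> (1 + Lf) * (\<rho> / (2 * (1 + Lf)))"
      using xd Lf0 by (intro mult_left_mono) (auto simp: \<epsilon>_def)
    also have "\<dots> = \<rho> / 2" using Lf0 by (simp add: field_simps)
    also have "\<dots> < \<rho>" using \<rho> by simp
    finally have "c \<in> ball cb \<rho>" using ncb by (simp add: dist_norm norm_minus_commute)
    with cE have cin: "c \<in> epi f \<inter> ball cb \<rho>" by blast
    define n where "n = (u, -1::real)"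
    have nrm: "\<forall>c'\<in>epi f. n \<bullet> (c' - c) \<le> 0"
    proof
      fix c' assume "c' \<in> epi f"
      then obtain y \<alpha> where c': "c' = (y, \<alpha>)" "f y \<le> ereal \<alpha>" by (cases c') (auto simp: epi_def)
      have "f x + ereal (u \<bullet> (y - x)) \<le> f y" using u unfolding subdiff_def by blast
      then have "r + u \<bullet> (y - x) \<le> \<alpha>" using c'(2) fx by (metis order_trans plus_ereal.simps(1) ereal_less_eq(3))
      then show "n \<bullet> (c' - c) \<le> 0" by (simp add: n_def c' c_def)
    qed
    obtain w where w: "\<forall>c'\<in>epi f. w \<bullet> (c' - cb) \<le> 0" "norm (w - n) \<le> \<kappa> * norm n * norm (c - cb)"
      using core[OF cin nrm] by blast
    have nu: "norm u \<le> N0 - 1"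
    proof -
      have "dist ubar u \<le> 1" using u by simp
      then show ?thesis using norm_triangle_sub[of u ubar] by (simp add: N0_def dist_norm norm_minus_commute)
    qed
    have nn: "norm n \<le> N0" using norm_Pair_le[of u "-1::real"] nu by (simp add: n_def)
    define \<beta> where "\<beta> = norm (w - n)"
    have \<beta>1: "\<beta> \<le> \<kappa>1 * dist x xbar"
    proof -
      have "\<beta> \<le> \<kappa> * norm n * norm (c - cb)" using w(2) \<beta>_def by simp
      also have "\<dots> \<le> \<kappa> * N0 * ((1 + Lf) * dist x xbar)"
        using nn ncb \<rho>(2) by (intro mult_mono mult_left_mono) (auto simp: N0_def)
      finally show ?thesis by (simp add: \<kappa>1_def mult_ac)
    qed
    have \<beta>2: "\<beta> \<le> 1/2"
    proof -
      have "\<kappa>1 * dist x xbar \<le> \<kappa>1 * (1 / (2 * (\<kappa>1 + 1)))"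
        using xd \<kappa>10 by (intro mult_left_mono) (auto simp: \<epsilon>_def)
      also have "\<dots> \<le> 1/2" using \<kappa>10 by (simp add: field_simps)
      finally show ?thesis using \<beta>1 by simp
    qed
    obtain u' s where ws: "w = (u', s)" by (cases w)
    have sb: "\<bar>s + 1\<bar> \<le> \<beta>"
      using norm_snd_le[where x = "u' - u" and y = "s + 1"] by (simp add: \<beta>_def ws n_def)
    have ub: "norm (u' - u) \<le> \<beta>"
      using norm_fst_le[where x = "u' - u" and y = "s + 1"] by (simp add: \<beta>_def ws n_def)
    define \<tau> where "\<tau> = - s"
    have \<tau>: "\<tau> \<ge> 1/2" using sb \<beta>2 by (simp add: \<tau>_def abs_le_iff)
    define v where "v = (1 / \<tau>) *\<^sub>R u'"
    have vsub: "v \<in> subdiff f xbar"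
      unfolding subdiff_def
    proof (intro CollectI conjI allI assms(5))
      fix y
      show "f xbar + ereal (v \<bullet> (y - xbar)) \<le> f y"
      proof (cases "f y = \<infinity>")
        case True then show ?thesis using fxb by simp
      next
        case False
        have "f y \<noteq> -\<infinity>" using assms(1) by (simp add: proper_fun_def)
        with False obtain b where fy: "f y = ereal b" by (cases "f y") auto
        have "(y, b) \<in> epi f" by (simp add: epi_def fy)
        then have "w \<bullet> ((y, b) - cb) \<le> 0" using w(1) by blast
        then have "u' \<bullet> (y - xbar) \<le> \<tau> * (b - rb)" by (simp add: ws cb_def \<tau>_def)
        then have "(1 / \<tau>) * (u' \<bullet> (y - xbar)) \<le> (1 / \<tau>) * (\<tau> * (b - rb))"
          using \<tau> by (intro mult_left_mono) auto
        then have "v \<bullet> (y - xbar) \<le> b - rb" using \<tau> by (simp add: v_def)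
        then show ?thesis by (simp add: fxb fy)
      qed
    qed
    have uv: "norm (u - v) \<le> \<kappa>f * dist x xbar"
    proof -
      have "u - v = (u - u') + (1 - 1 / \<tau>) *\<^sub>R u'" by (simp add: v_def algebra_simps)
      then have "norm (u - v) \<le> norm (u - u') + \<bar>1 - 1 / \<tau>\<bar> * norm u'"
        by (metis norm_scaleR norm_triangle_ineq)
      also have "\<bar>1 - 1 / \<tau>\<bar> = \<bar>\<tau> - 1\<bar> / \<tau>" using \<tau> by (simp add: field_simps abs_div)
      also have "\<bar>\<tau> - 1\<bar> / \<tau> \<le> 2 * \<beta>"
      proof -
        have "\<bar>\<tau> - 1\<bar> \<le> \<beta>" using sb by (simp add: \<tau>_def abs_minus_commute add.commute)
        moreover have "\<beta> \<le> \<beta> * (\<tau> * 2)"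
          using \<tau> mult_left_mono[of 1 "\<tau> * 2" \<beta>] by (simp add: \<beta>_def)
        ultimately show ?thesis using \<tau> by (simp add: field_simps)
      qed
      then have "norm (u - u') + \<bar>\<tau> - 1\<bar> / \<tau> * norm u' \<le> norm (u - u') + 2 * \<beta> * norm u'"
        by (intro add_left_mono mult_right_mono) auto
      also have "norm u' \<le> N0"
        using norm_triangle_sub[of u' u] ub nu \<beta>2 by (simp add: norm_minus_commute)
      then have "norm (u - u') + 2 * \<beta> * norm u' \<le> \<beta> + 2 * \<beta> * N0"
        using ub \<beta>_def by (intro add_mono mult_left_mono) (auto simp: norm_minus_commute)
      also have "\<dots> = (2 * N0 + 1) * \<beta>" by (simp add: algebra_simps)
      also have "\<dots> \<le> (2 * N0 + 1) * (\<kappa>1 * dist x xbar)"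
        using \<beta>1 by (intro mult_left_mono) (auto simp: N0_def)
      finally show ?thesis by (simp add: \<kappa>f_def mult_ac)
    qed
    show "u \<in> {s + t |s t. s \<in> subdiff f xbar \<and> norm t \<le> \<kappa>f * dist x xbar}"
      using vsub uv by (intro CollectI exI[of _ v] exI[of _ "u - v"]) auto
  qed
  show ?thesis unfolding calm_at_def
    using assms(6) \<kappa>f0 \<epsilon>0 incl by (intro conjI exI[of _ \<kappa>f] exI[of _ \<epsilon>] exI[of _ 1]) auto
qed

end
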